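(* Let $n\geq 1$. There exist functions $F\in C^\infty(\mathbb{R}^n)$ and $v\in C^\infty(\mathbb{R}^n)$ such that \[ \sum_{i,j=1}^n D_iv\,D_jv\,D^2_{ij}v\;+\;\sum_{i=1}^n D_iv\,D_iF\;=\;0\quad\text{on }\mathbb{R}^n, \] and open sets $\Omega^+,\Omega^-\subseteq\mathbb{R}^n$ such that \[ \sup_{\Omega^+} v\;>\;\max_{\partial\Omega^+} v \qquad\text{and}\qquad \inf_{\Omega^-} v\;<\;\min_{\partial\Omega^-} v , \] i.e. $v$ satisfies neither the Maximum nor the Minimum Principle.
   Context: $D_i=\partial/\partial x_i$ and $D^2_{ij}=\partial^2/\partial x_i\partial x_j$. The equation is the scalar $\infty$-Laplace equation perturbed by the linear first-order term $Dv\cdot DF$. *)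

theory Defs
  imports "HOL-Analysis.Analysis"
begin

definition pderiv :: "'n::finite \<Rightarrow> (real^'n \<Rightarrow> real) \<Rightarrow> real^'n \<Rightarrow> real" where
  "pderiv i f x = deriv (\<lambda>t. f (x + t *\<^sub>R axis i 1)) 0"

fun iter_pderiv :: "'n::finite list \<Rightarrow> (real^'n \<Rightarrow> real) \<Rightarrow> real^'n \<Rightarrow> real" where
  "iter_pderiv [] f = f"
| "iter_pderiv (i # is) f = pderiv i (iter_pderiv is f)"

definition smooth_Rn :: "(real^'n::finite \<Rightarrow> real) \<Rightarrow> bool" where
  "smooth_Rn f \<longleftrightarrow>
     (\<forall>is. continuous_on UNIV (iter_pderiv is f)) \<and>
     (\<forall>is i x. (\<lambda>t. iter_pderiv is f (x + t *\<^sub>R axis i 1)) differentiable (at 0))"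

end

theory Submission imports Defs begin

inductive polyf :: "(real^'n::finite \<Rightarrow> real) \<Rightarrow> bool" where
  pc: "polyf (\<lambda>x. c)"
| px: "polyf (\<lambda>x. x $ k)"
| pa: "polyf f \<Longrightarrow> polyf g \<Longrightarrow> polyf (\<lambda>x. f x + g x)"
| pm: "polyf f \<Longrightarrow> polyf g \<Longrightarrow> polyf (\<lambda>x. f x * g x)"

lemma polyf_cont: "polyf f \<Longrightarrow> continuous_on UNIV f"
  by (induction rule: polyf.induct) (auto intro!: continuous_intros)

lemma polyf_deriv: "polyf f \<Longrightarrow> \<exists>g. polyf g \<and>
   (\<forall>x. ((\<lambda>t. f (x + t *\<^sub>R axis i 1)) has_real_derivative g x) (at 0))"
proof (induction rule: polyf.induct)
  case (pc c)
  then show ?case by (intro exI[of _ "\<lambda>x. 0"]) (auto intro: polyf.intros)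
next
  case (px k)
  show ?case
    apply (intro exI[of _ "\<lambda>x. axis i 1 $ k"])
    apply (auto intro!: polyf.intros derivative_eq_intros)
    done
next
  case (pa f g)
  then obtain f' g' where "polyf f'" "polyf g'"
    "\<forall>x. ((\<lambda>t. f (x + t *\<^sub>R axis i 1)) has_real_derivative f' x) (at 0)"
    "\<forall>x. ((\<lambda>t. g (x + t *\<^sub>R axis i 1)) has_real_derivative g' x) (at 0)" by blast
  then show ?case
    by (intro exI[of _ "\<lambda>x. f' x + g' x"]) (auto intro!: polyf.intros derivative_eq_intros)
next
  case (pm f g)
  then obtain f' g' where "polyf f'" "polyf g'"
    "\<forall>x. ((\<lambda>t. f (x + t *\<^sub>R axis i 1)) has_real_derivative f' x) (at 0)"
    "\<forall>x. ((\<lambda>t. g (x + t *\<^sub>R axis i 1)) has_real_derivative g' x) (at 0)" by blast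
  then show ?case
    using pm.hyps by (intro exI[of _ "\<lambda>x. f' x * g x + f x * g' x"]) (auto intro!: polyf.intros derivative_eq_intros)
qed

lemma polyf_pderiv: "polyf f \<Longrightarrow> polyf (pderiv i f) \<and>
   (\<forall>x. (\<lambda>t. f (x + t *\<^sub>R axis i 1)) differentiable (at 0))"
proof -
  assume "polyf f"
  from polyf_deriv[OF this, of i] obtain g where g: "polyf g"
    "\<forall>x. ((\<lambda>t. f (x + t *\<^sub>R axis i 1)) has_real_derivative g x) (at 0)" by blast
  have "pderiv i f = g" using g(2) unfolding pderiv_def by (auto intro!: DERIV_imp_deriv)
  with g show ?thesis using real_differentiable_def by blast
qed

lemma polyf_iter: "polyf f \<Longrightarrow> polyf (iter_pderiv is f)"
  by (induction "is") (auto simp: polyf_pderiv)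

lemma polyf_smooth: "polyf f \<Longrightarrow> smooth_Rn f"
  unfolding smooth_Rn_def using polyf_iter polyf_cont polyf_pderiv by blast

lemma polyf_sum: "(\<And>k. polyf (f k)) \<Longrightarrow> polyf (\<lambda>x. \<Sum>k\<in>S. f k x)"
proof (induction S rule: infinite_finite_induct)
  case (infinite A) then show ?case by (simp add: pc) 
next
  case empty then show ?case by (simp add: pc)
next
  case (insert x F) then show ?case by (simp add: pa)
qed

lemma polyf_inner: "polyf (\<lambda>x::real^'n::finite. x \<bullet> x)"
  unfolding inner_vec_def by (intro polyf_sum) (simp add: pm px)

definition nsq :: "real^'n::finite \<Rightarrow> real" where "nsq x = x \<bullet> x"
definition vv :: "real^'n::finite \<Rightarrow> real" where "vv x = nsq x ^ 2 - 2 * nsq x"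
definition FF :: "real^'n::finite \<Rightarrow> real" where "FF x = - 8 * nsq x * (nsq x - 1) ^ 2"

lemma nsq_shift: "nsq (x + t *\<^sub>R axis i 1) = nsq x + 2 * t * x $ i + t ^ 2"
  unfolding nsq_def by (simp add: inner_add_left inner_add_right inner_axis inner_commute
      power2_eq_square algebra_simps)

lemma shift_comp: "(x + t *\<^sub>R axis i 1) $ j = x $ j + t * (if j = i then 1 else 0)"
  by (simp add: axis_def)

lemma pd_vv: "pderiv i vv x = (4 * nsq x - 4) * x $ i"
  unfolding pderiv_def vv_def nsq_shift
  by (rule DERIV_imp_deriv) (auto intro!: derivative_eq_intros simp: algebra_simps)

lemma pd_vv': "pderiv j vv = (\<lambda>x. (4 * nsq x - 4) * x $ j)"
  using pd_vv by blast

lemma pd_vv2: "pderiv i (pderiv j vv) x = 8 * x$i * x$j + (4 * nsq x - 4) * (if j = i then 1 else 0)"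
  unfolding pderiv_def pd_vv' nsq_shift shift_comp
  by (rule DERIV_imp_deriv) (auto intro!: derivative_eq_intros simp: algebra_simps)

lemma pd_FF: "pderiv i FF x = (- 8 * (nsq x - 1)^2 - 16 * nsq x * (nsq x - 1)) * 2 * x $ i"
  unfolding pderiv_def FF_def nsq_shift
  by (rule DERIV_imp_deriv) (auto intro!: derivative_eq_intros simp: algebra_simps power2_eq_square)

lemma nsq_sum: "nsq x = (\<Sum>j\<in>UNIV. x$j * x$j)"
  unfolding nsq_def inner_vec_def by simp

lemma eqn: "(\<Sum>i\<in>UNIV. \<Sum>j\<in>UNIV. pderiv i vv x * pderiv j vv x * pderiv i (pderiv j vv) x)
           + (\<Sum>i\<in>UNIV. pderiv i vv x * pderiv i FF x) = 0"
proof -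
  define a where "a = 4 * nsq x - 4"
  define u where "u = nsq x"
  have inner: "(\<Sum>j\<in>UNIV. pderiv i vv x * pderiv j vv x * pderiv i (pderiv j vv) x)
     = 8 * a^2 * (x$i * x$i) * u + a^3 * (x$i * x$i)" for i
  proof -
    have "(\<Sum>j\<in>UNIV. pderiv i vv x * pderiv j vv x * pderiv i (pderiv j vv) x)
      = (\<Sum>j\<in>UNIV. 8 * a^2 * (x$i * x$i) * (x$j * x$j) + (if j = i then a^3 * (x$i * x$i) else 0))"
      unfolding pd_vv pd_vv2 a_def[symmetric]
      by (rule sum.cong) (auto simp: algebra_simps power2_eq_square power3_eq_cube)
    also have "\<dots> = 8 * a^2 * (x$i * x$i) * u + a^3 * (x$i * x$i)"
      unfolding sum.distrib u_def nsq_sum sum_distrib_left[symmetric] by simp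
    finally show ?thesis .
  qed
  have "(\<Sum>i\<in>UNIV. \<Sum>j\<in>UNIV. pderiv i vv x * pderiv j vv x * pderiv i (pderiv j vv) x)
     = 8 * a^2 * u * u + a^3 * u"
  proof -
    have "(\<Sum>i\<in>UNIV. \<Sum>j\<in>UNIV. pderiv i vv x * pderiv j vv x * pderiv i (pderiv j vv) x)
       = (\<Sum>i\<in>UNIV. (x$i * x$i) * (8 * a^2 * u + a^3))"
      unfolding inner by (simp add: algebra_simps)
    also have "\<dots> = u * (8 * a^2 * u + a^3)"
      unfolding sum_distrib_right[symmetric] u_def nsq_sum ..
    finally show ?thesis by (simp add: algebra_simps)
  qed
  moreover have "(\<Sum>i\<in>UNIV. pderiv i vv x * pderiv i FF x)
     = a * (- 8 * (u - 1)^2 - 16 * u * (u - 1)) * 2 * u"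
  proof -
    have "(\<Sum>i\<in>UNIV. pderiv i vv x * pderiv i FF x)
       = (\<Sum>i\<in>UNIV. (x$i * x$i) * (a * (- 8 * (u - 1)^2 - 16 * u * (u - 1)) * 2))"
      unfolding pd_vv pd_FF by (intro sum.cong refl) (simp add: a_def u_def algebra_simps power2_eq_square)
    also have "\<dots> = u * (a * (- 8 * (u - 1)^2 - 16 * u * (u - 1)) * 2)"
      unfolding sum_distrib_right[symmetric] u_def nsq_sum ..
    finally show ?thesis by (simp add: algebra_simps)
  qed
  ultimately show ?thesis
    by (simp add: a_def u_def[symmetric] algebra_simps power2_eq_square power3_eq_cube)
qed

lemma nsq_norm: "nsq x = norm x ^ 2"
  by (simp add: nsq_def power2_norm_eq_inner)

lemma polyf_vv: "polyf vv"
proof -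
  have e: "vv = (\<lambda>x. nsq x * nsq x + (\<lambda>x. -2) x * nsq x)"
    by (auto simp: vv_def power2_eq_square fun_eq_iff)
  have n: "polyf nsq" using polyf_inner unfolding nsq_def[abs_def] .
  show ?thesis by (subst e) (intro pa pm pc n)
qed

lemma polyf_FF: "polyf FF"
proof -
  have e: "FF = (\<lambda>x. (\<lambda>x. -8) x * nsq x * ((nsq x + (\<lambda>x. -1) x) * (nsq x + (\<lambda>x. -1) x)))"
    by (auto simp: FF_def power2_eq_square fun_eq_iff)
  have n: "polyf nsq" using polyf_inner unfolding nsq_def[abs_def] .
  show ?thesis by (subst e) (intro pa pm pc n)
qed

lemma sphere_vals: "r \<ge> 0 \<Longrightarrow> vv ` sphere (0::real^'n::finite) r = {r^4 - 2 * r^2}"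
proof -
  assume r: "r \<ge> 0"
  obtain k :: 'n where True by blast
  have "norm (axis k (1::real) :: real^'n) = 1" by (rule norm_axis_1)
  then have "norm (r *\<^sub>R axis k 1 :: real^'n) = r" using r by simp
  then have m: "(r *\<^sub>R axis k 1 :: real^'n) \<in> sphere 0 r" unfolding mem_sphere dist_norm by simp
  moreover have *: "\<And>y. y \<in> sphere (0::real^'n) r \<Longrightarrow> vv y = r^4 - 2 * r^2"
    by (simp add: vv_def nsq_norm)
  have "vv (r *\<^sub>R axis k 1 :: real^'n) \<in> vv ` sphere (0::real^'n) r" using m by (rule imageI)
  moreover have "vv (r *\<^sub>R axis k 1 :: real^'n) = r^4 - 2 * r^2" using m by (rule *)
  ultimately have "r^4 - 2 * r^2 \<in> vv ` sphere (0::real^'n) r" by metis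
  then show ?thesis using * by blast
qed

theorem mainTheorem3:
  shows "\<exists>(F :: real^'n::finite \<Rightarrow> real) (v :: real^'n \<Rightarrow> real).
     smooth_Rn F \<and> smooth_Rn v \<and>
     (\<forall>x. (\<Sum>i\<in>UNIV. \<Sum>j\<in>UNIV. pderiv i v x * pderiv j v x * pderiv i (pderiv j v) x)
           + (\<Sum>i\<in>UNIV. pderiv i v x * pderiv i F x) = 0) \<and>
     (\<exists>\<Omega>p \<Omega>m :: (real^'n) set.
        open \<Omega>p \<and> bounded \<Omega>p \<and> \<Omega>p \<noteq> {} \<and>
        open \<Omega>m \<and> bounded \<Omega>m \<and> \<Omega>m \<noteq> {} \<and>
        Sup (v ` \<Omega>p) > Sup (v ` frontier \<Omega>p) \<and>
        Inf (v ` \<Omega>m) < Inf (v ` frontier \<Omega>m))"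
proof (intro exI conjI allI)
  show "smooth_Rn FF" by (rule polyf_smooth[OF polyf_FF])
  show "smooth_Rn (vv :: real^'n \<Rightarrow> real)" by (rule polyf_smooth[OF polyf_vv])
  show "(\<Sum>i\<in>UNIV. \<Sum>j\<in>UNIV. pderiv i vv x * pderiv j vv x * pderiv i (pderiv j vv) x)
           + (\<Sum>i\<in>UNIV. pderiv i vv x * pderiv i FF x) = 0" for x :: "real^'n"
    by (rule eqn)
  show "open (ball (0::real^'n) 1)" "bounded (ball (0::real^'n) 1)" "ball (0::real^'n) 1 \<noteq> {}"
    by auto
  show "open (ball (0::real^'n) (sqrt 2))" "bounded (ball (0::real^'n) (sqrt 2))"
      "ball (0::real^'n) (sqrt 2) \<noteq> {}" by auto
  have "Sup (vv ` frontier (ball (0::real^'n) 1)) = -1"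
  proof -
    have "vv ` sphere (0::real^'n) 1 = {-1}" using sphere_vals[of 1, where 'n='n] by simp
    then show ?thesis by simp
  qed
  moreover have "Sup (vv ` ball (0::real^'n) 1) \<ge> 0"
  proof -
    have "vv (0::real^'n) = 0" by (simp add: vv_def nsq_def)
    moreover have "bdd_above (vv ` ball (0::real^'n) 1)"
    proof (rule bdd_aboveI2[of _ _ 0])
      fix x :: "real^'n" assume "x \<in> ball 0 1"
      then have "norm x < 1" by simp
      then have "norm x ^ 2 \<le> 1" by (simp add: power_le_one)
      moreover have "0 \<le> norm x ^ 2" by simp
      ultimately have "norm x ^ 2 * norm x ^ 2 \<le> norm x ^ 2 * 1" by (intro mult_left_mono)
      moreover have "vv x = norm x ^ 2 * norm x ^ 2 - 2 * norm x ^ 2" by (simp add: vv_def nsq_norm power2_eq_square)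
      ultimately show "vv x \<le> 0" using zero_le_power2[of "norm x"] by linarith
    qed
    ultimately show ?thesis by (metis cSup_upper centre_in_ball image_eqI zero_less_one)
  qed
  ultimately show "Sup (vv ` ball (0::real^'n) 1) > Sup (vv ` frontier (ball (0::real^'n) 1))"
    by linarith
  have "Inf (vv ` frontier (ball (0::real^'n) (sqrt 2))) = 0"
  proof -
    have "vv ` sphere (0::real^'n) (sqrt 2) = {0}" using sphere_vals[of "sqrt 2", where 'n='n]
      by (simp add: power4_eq_xxxx mult.assoc)
    then show ?thesis by simp
  qed
  moreover have "Inf (vv ` ball (0::real^'n) (sqrt 2)) \<le> -1"
  proof -
    obtain k :: 'n where True by blast
    have "axis k 1 \<in> ball (0::real^'n) (sqrt 2)" by (simp add: norm_axis_1)
    moreover have "vv (axis k 1 :: real^'n) = -1" by (simp add: vv_def nsq_norm norm_axis_1)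
    moreover have "bdd_below (vv ` ball (0::real^'n) (sqrt 2))"
    proof (rule bdd_belowI2[of _ "-1"])
      fix x :: "real^'n"
      have "0 \<le> (nsq x - 1)^2" by simp
      then show "-1 \<le> vv x" by (simp add: vv_def power2_eq_square algebra_simps)
    qed
    ultimately show ?thesis by (metis cInf_lower image_eqI)
  qed
  ultimately show "Inf (vv ` ball (0::real^'n) (sqrt 2)) < Inf (vv ` frontier (ball (0::real^'n) (sqrt 2)))"
    by linarith
qed

end
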